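(* Let $S$ be a finite set of points in the plane, let $\mathcal D$ be a set of $k$ pairwise non-opposite directions such that $S$ is in $\mathcal D$-general position, and let $T$ be a $\mathcal D$-monotone geometric spanning tree of $S$. Then the maximum degree of $T$ is at most $2k$.
   Context: A direction is a unit vector in $\mathbb{R}^2$; two directions $d,d'$ are opposite if $d'=-d$. A finite point set $S$ is in $d$-general position if no two points of $S$ lie on a common line orthogonal to $d$; $S$ is in $\mathcal D$-general position if it is in $d$-general position for every $d\in\mathcal D$. A geometric path $\langle p_1,\dots,p_r\rangle$ is $d$-monotone if its vertex set is in $d$-general position and $\langle p_1,d\rangle,\dots,\langle p_r,d\rangle$ is strictly increasing or strictly decreasing. A geometric spanning tree of $S$ is a tree with vertex set $S$ whose edges are straight segments. Given a finite set $\mathcal D$ of pairwise non-opposite directions, a geometric spanning tree $T$ of $S$ is $\mathcal D$-monotone if for every pair of vertices $u,v$ there is $d\in\mathcal D$ such that the unique path of $T$ from $u$ to $v$ is $d$-monotone. *)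

theory Defs
  imports "HOL-Analysis.Analysis"
begin

type_synonym point = "real ^ 2"

definition direction :: "point \<Rightarrow> bool" where
  "direction d \<longleftrightarrow> norm d = 1"

definition pairwise_non_opposite :: "point set \<Rightarrow> bool" where
  "pairwise_non_opposite D \<longleftrightarrow> (\<forall>d\<in>D. \<forall>d'\<in>D. d' \<noteq> - d)"

definition d_general_position :: "point \<Rightarrow> point set \<Rightarrow> bool" where
  "d_general_position d S \<longleftrightarrow> (\<forall>p\<in>S. \<forall>q\<in>S. p \<noteq> q \<longrightarrow> p \<bullet> d \<noteq> q \<bullet> d)"

definition D_general_position :: "point set \<Rightarrow> point set \<Rightarrow> bool" where
  "D_general_position D S \<longleftrightarrow> (\<forall>d\<in>D. d_general_position d S)"

definition d_monotone :: "point \<Rightarrow> point list \<Rightarrow> bool" where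
  "d_monotone d ps \<longleftrightarrow> d_general_position d (set ps) \<and>
     (sorted_wrt (<) (map (\<lambda>p. p \<bullet> d) ps) \<or> sorted_wrt (>) (map (\<lambda>p. p \<bullet> d) ps))"

text \<open>Geometric graphs: vertex set S, edges are 2-element subsets of S
  (each edge is the straight segment between its two endpoints).\<close>
definition geom_graph :: "point set \<Rightarrow> point set set \<Rightarrow> bool" where
  "geom_graph S E \<longleftrightarrow> (\<forall>e\<in>E. e \<subseteq> S \<and> card e = 2)"

definition graph_path :: "point set \<Rightarrow> point set set \<Rightarrow> point list \<Rightarrow> point \<Rightarrow> point \<Rightarrow> bool" where
  "graph_path S E ps u v \<longleftrightarrow> ps \<noteq> [] \<and> hd ps = u \<and> last ps = v \<and> distinct ps \<and>
     set ps \<subseteq> S \<and> (\<forall>i. Suc i < length ps \<longrightarrow> {ps ! i, ps ! Suc i} \<in> E)"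

definition graph_connected :: "point set \<Rightarrow> point set set \<Rightarrow> bool" where
  "graph_connected S E \<longleftrightarrow> (\<forall>u\<in>S. \<forall>v\<in>S. \<exists>ps. graph_path S E ps u v)"

definition graph_has_cycle :: "point set \<Rightarrow> point set set \<Rightarrow> bool" where
  "graph_has_cycle S E \<longleftrightarrow> (\<exists>ps. length ps \<ge> 3 \<and> graph_path S E ps (hd ps) (last ps) \<and>
     {last ps, hd ps} \<in> E)"

definition geom_spanning_tree :: "point set \<Rightarrow> point set set \<Rightarrow> bool" where
  "geom_spanning_tree S E \<longleftrightarrow> geom_graph S E \<and> graph_connected S E \<and> \<not> graph_has_cycle S E"

text \<open>D-monotone: for every pair of vertices, the (unique) tree path between them
  is d-monotone for some d in D. Since the path in a tree is unique, we quantify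
  over all paths from u to v.\<close>
definition D_monotone_tree :: "point set \<Rightarrow> point set \<Rightarrow> point set set \<Rightarrow> bool" where
  "D_monotone_tree D S E \<longleftrightarrow> (\<forall>u\<in>S. \<forall>v\<in>S. \<exists>d\<in>D. \<forall>ps. graph_path S E ps u v \<longrightarrow> d_monotone d ps)"

definition degree :: "point set set \<Rightarrow> point \<Rightarrow> nat" where
  "degree E v = card {e\<in>E. v \<in> e}"

end

theory Submission
  imports Defs
begin

definition sig :: "point set \<Rightarrow> point \<Rightarrow> (point \<Rightarrow> bool)" where
  "sig D x = (\<lambda>d. d \<in> D \<and> x \<bullet> d > 0)"

definition pats :: "point set \<Rightarrow> (point \<Rightarrow> bool) set" where
  "pats D = {sig D x | x. \<forall>d\<in>D. x \<bullet> d \<noteq> 0}"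

lemma inner2: "(a::point) \<bullet> b = a$1 * b$1 + a$2 * b$2"
  by (simp add: inner_vec_def sum_2)

lemma geo:
  fixes x y d :: point
  assumes vx: "\<forall>d'\<in>D. x \<bullet> d' \<noteq> 0" and vy: "\<forall>d'\<in>D. y \<bullet> d' \<noteq> 0"
    and eq: "sig D x = sig D y" and xd: "x \<bullet> d > 0" and yd: "y \<bullet> d < 0"
  shows "sig D x \<in> {sig D (\<chi> i. if i = 1 then - (d$2) else d$1),
                     sig D (- (\<chi> i. if i = 1 then - (d$2) else d$1))}"
proof -
  define r :: point where "r = (\<chi> i. if i = 1 then - (d$2) else d$1)"
  define a where "a = x \<bullet> d"
  define b where "b = y \<bullet> d"
  define t where "t = a / (a - b)"
  have ab: "a > 0" "b < 0" using xd yd a_def b_def by auto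
  have t: "0 < t" "t < 1" using ab by (auto simp: t_def field_simps)
  define z where "z = (1 - t) *\<^sub>R x + t *\<^sub>R y"
  have "z \<bullet> d = (1 - t) * a + t * b" by (simp add: z_def inner_add_left a_def b_def)
  also have "\<dots> = 0" using ab by (simp add: t_def field_simps)
  finally have zd: "z \<bullet> d = 0" .
  have zD: "\<forall>d'\<in>D. z \<bullet> d' \<noteq> 0 \<and> (z \<bullet> d' > 0 \<longleftrightarrow> x \<bullet> d' > 0)"
  proof
    fix d' assume d': "d' \<in> D"
    have s: "x \<bullet> d' > 0 \<longleftrightarrow> y \<bullet> d' > 0" using eq d' unfolding sig_def by metis
    have "z \<bullet> d' = (1 - t) * (x \<bullet> d') + t * (y \<bullet> d')" by (simp add: z_def inner_add_left)
    moreover have "x \<bullet> d' \<noteq> 0" "y \<bullet> d' \<noteq> 0" using vx vy d' by auto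
    ultimately show "z \<bullet> d' \<noteq> 0 \<and> (z \<bullet> d' > 0 \<longleftrightarrow> x \<bullet> d' > 0)"
      using s t
      by (smt (verit, best) mult_pos_pos mult_pos_neg mult_neg_neg)
  qed
  have sz: "sig D z = sig D x" using zD unfolding sig_def by auto
  have dn: "d$1 * d$1 + d$2 * d$2 \<noteq> 0"
  proof
    assume "d$1 * d$1 + d$2 * d$2 = 0"
    moreover have "d$1 * d$1 \<ge> 0" "d$2 * d$2 \<ge> 0" by simp_all
    ultimately have "d$1 * d$1 = 0" "d$2 * d$2 = 0" by linarith+
    then have "d$1 = 0" "d$2 = 0" by simp_all
    then show False using xd by (simp add: inner2)
  qed
  define c where "c = (z$2 * d$1 - z$1 * d$2) / (d$1 * d$1 + d$2 * d$2)"
  have z0: "z$1 * d$1 + z$2 * d$2 = 0" using zd by (simp add: inner2)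
  define n where "n = d$1 * d$1 + d$2 * d$2"
  have e1: "z$1 * n - (- (z$2 * d$1 - z$1 * d$2) * d$2) = d$1 * (z$1 * d$1 + z$2 * d$2)"
    unfolding n_def by (simp add: algebra_simps)
  have e2: "z$2 * n - (z$2 * d$1 - z$1 * d$2) * d$1 = d$2 * (z$1 * d$1 + z$2 * d$2)"
    unfolding n_def by (simp add: algebra_simps)
  have nz: "n \<noteq> 0" using dn n_def by simp
  have z1: "z$1 = c * (- d$2)"
  proof -
    have "z$1 * n = - (z$2 * d$1 - z$1 * d$2) * d$2" using e1 z0 by simp
    then show ?thesis using nz unfolding c_def n_def[symmetric] by (simp add: field_simps)
  qed
  have z2: "z$2 = c * d$1"
  proof -
    have "z$2 * n = (z$2 * d$1 - z$1 * d$2) * d$1" using e2 z0 by simp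
    then show ?thesis using nz unfolding c_def n_def[symmetric] by (simp add: field_simps)
  qed
  have zr: "\<And>d'. z \<bullet> d' = c * (r \<bullet> d')"
    by (simp add: inner2 z1 z2 r_def algebra_simps)
  consider "c > 0" | "c < 0" | "c = 0" by linarith
  then have "sig D z \<in> {sig D r, sig D (- r)}"
  proof cases
    case 1
    then have "sig D z = sig D r" unfolding sig_def using zr
      by (auto simp: zero_less_mult_iff)
    then show ?thesis by simp
  next
    case 2
    then have "sig D z = sig D (- r)" unfolding sig_def using zr
      by (auto simp: zero_less_mult_iff)
    then show ?thesis by simp
  next
    case 3
    then have "D = {}" using zD zr by auto
    then show ?thesis by (simp add: sig_def)
  qed
  then show ?thesis using sz r_def by simp
qed


lemma pats_finite: "finite D \<Longrightarrow> finite (pats D)"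
proof -
  assume f: "finite D"
  have "pats D \<subseteq> (\<lambda>A x. x \<in> A) ` Pow D"
  proof
    fix g assume "g \<in> pats D"
    then obtain x where g: "g = sig D x" unfolding pats_def by auto
    have "g = (\<lambda>y. y \<in> {d \<in> D. x \<bullet> d > 0})" unfolding g sig_def by auto
    then show "g \<in> (\<lambda>A x. x \<in> A) ` Pow D" by blast
  qed
  then show ?thesis using f finite_subset by blast
qed

lemma pats_card: "finite D \<Longrightarrow> card (pats D) \<le> (if D = {} then 1 else 2 * card D)"
proof (induction D rule: finite_induct)
  case empty
  have "pats {} = {\<lambda>_. False}" unfolding pats_def sig_def by auto
  then show ?case by simp
next
  case (insert d D)
  define D' where "D' = insert d D"
  define r :: point where "r = (\<chi> i. if i = 1 then - (d$2) else d$1)"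
  define A where "A = {sig D' x | x. (\<forall>d'\<in>D'. x \<bullet> d' \<noteq> 0) \<and> x \<bullet> d > 0}"
  define B where "B = {sig D' x | x. (\<forall>d'\<in>D'. x \<bullet> d' \<noteq> 0) \<and> x \<bullet> d < 0}"
  define res :: "(point \<Rightarrow> bool) \<Rightarrow> (point \<Rightarrow> bool)" where "res f = f(d := False)" for f
  have resig: "res (sig D' x) = sig D x" for x
    using insert(2) unfolding res_def sig_def D'_def by (auto simp: fun_eq_iff)
  have PU: "pats D' = A \<union> B" unfolding pats_def A_def B_def D'_def
  proof (intro equalityI subsetI)
    fix f assume "f \<in> {sig (insert d D) x |x. \<forall>d\<in>insert d D. x \<bullet> d \<noteq> 0}"
    then obtain x where x: "f = sig (insert d D) x" "\<forall>d\<in>insert d D. x \<bullet> d \<noteq> 0" by blast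
    then have "x \<bullet> d > 0 \<or> x \<bullet> d < 0" by auto
    then show "f \<in> {sig (insert d D) x |x. (\<forall>d'\<in>insert d D. x \<bullet> d' \<noteq> 0) \<and> 0 < x \<bullet> d} \<union>
          {sig (insert d D) x |x. (\<forall>d'\<in>insert d D. x \<bullet> d' \<noteq> 0) \<and> x \<bullet> d < 0}" using x by blast
  qed blast
  have fin': "finite (pats D')" using pats_finite insert(1) D'_def by simp
  have fA: "finite A" "finite B" using fin' PU by simp_all
  have injA: "inj_on res A"
  proof (rule inj_onI)
    fix f g assume "f \<in> A" "g \<in> A" "res f = res g"
    moreover have "\<And>h. h \<in> A \<Longrightarrow> h = (res h)(d := True)"
      unfolding A_def res_def sig_def D'_def by (auto simp: fun_eq_iff)
    ultimately show "f = g" by metis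
  qed
  have injB: "inj_on res B"
  proof (rule inj_onI)
    fix f g assume "f \<in> B" "g \<in> B" "res f = res g"
    moreover have "\<And>h. h \<in> B \<Longrightarrow> h = (res h)(d := False)"
      unfolding B_def res_def sig_def D'_def by (auto simp: fun_eq_iff)
    ultimately show "f = g" by metis
  qed
  have sub: "res ` A \<union> res ` B \<subseteq> pats D"
  proof
    fix p assume "p \<in> res ` A \<union> res ` B"
    then obtain x where x: "\<forall>d'\<in>D'. x \<bullet> d' \<noteq> 0" "p = res (sig D' x)"
      unfolding A_def B_def by blast
    then have "p = sig D x" "\<forall>d'\<in>D. x \<bullet> d' \<noteq> 0" using resig D'_def by auto
    then show "p \<in> pats D" unfolding pats_def by blast
  qed
  have int: "res ` A \<inter> res ` B \<subseteq> {sig D r, sig D (- r)}"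
  proof
    fix p assume "p \<in> res ` A \<inter> res ` B"
    then obtain x y where x: "\<forall>d'\<in>D'. x \<bullet> d' \<noteq> 0" "x \<bullet> d > 0" "p = sig D x"
      and y: "\<forall>d'\<in>D'. y \<bullet> d' \<noteq> 0" "y \<bullet> d < 0" "p = sig D y"
      unfolding A_def B_def using resig by auto
    show "p \<in> {sig D r, sig D (- r)}"
      using geo[of D x y d] x y unfolding D'_def r_def by auto
  qed
  have int2: "card (res ` A \<inter> res ` B) \<le> (if D = {} then 1 else 2)"
  proof (cases "D = {}")
    case True
    have "sig D r = sig D (- r)" using True by (simp add: sig_def)
    then show ?thesis using True card_mono[OF _ int] by simp
  next
    case False
    have "card {sig D r, sig D (- r)} \<le> 2" by (simp add: card_insert_le_m1)
    then show ?thesis using False card_mono[OF _ int] by simp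
  qed
  have "card (pats D') \<le> card A + card B" unfolding PU by (rule card_Un_le)
  also have "\<dots> = card (res ` A) + card (res ` B)" using injA injB card_image by metis
  also have "\<dots> = card (res ` A \<union> res ` B) + card (res ` A \<inter> res ` B)"
    by (rule card_Un_Int) (use fA in simp_all)
  also have "\<dots> \<le> card (pats D) + (if D = {} then 1 else 2)"
    using card_mono[OF pats_finite[OF insert(1)] sub] int2 by linarith
  finally have "card (pats D') \<le> card (pats D) + (if D = {} then 1 else 2)" .
  moreover have "card D' = card D + 1" using insert D'_def by simp
  moreover have "D' \<noteq> {}" using D'_def by simp
  ultimately show ?case using insert.IH unfolding D'_def[symmetric]
    by (cases "D = {}") auto
qed


theorem lemma3:
  fixes S D :: "(real ^ 2) set" and E :: "(real ^ 2) set set" and k :: nat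
  assumes "finite S"
    and "finite D" and "card D = k"
    and "\<forall>d\<in>D. direction d"
    and "pairwise_non_opposite D"
    and "D_general_position D S"
    and "geom_spanning_tree S E"
    and "D_monotone_tree D S E"
  shows "\<forall>v\<in>S. degree E v \<le> 2 * k"
proof
  fix v assume vS: "v \<in> S"
  have gg: "\<forall>e\<in>E. e \<subseteq> S \<and> card e = 2"
    using assms(7) unfolding geom_spanning_tree_def geom_graph_def by blast
  define N where "N = {w. {v, w} \<in> E}"
  have Nv: "w \<in> S \<and> w \<noteq> v" if "w \<in> N" for w
  proof -
    have "{v, w} \<subseteq> S" "card {v, w} = 2" using gg that N_def by auto
    then show ?thesis by (auto simp: card_insert_if split: if_splits)
  qed
  have finN: "finite N" using Nv assms(1) by (metis finite_subset subsetI)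
  have img: "{e\<in>E. v \<in> e} = (\<lambda>w. {v, w}) ` N"
  proof (intro equalityI subsetI)
    fix e assume e: "e \<in> {e\<in>E. v \<in> e}"
    then have "card e = 2" using gg by auto
    then obtain a b where ab: "e = {a, b}" "a \<noteq> b" by (meson card_2_iff)
    show "e \<in> (\<lambda>w. {v, w}) ` N"
    proof (cases "v = a")
      case True
      then show ?thesis using e ab unfolding N_def by auto
    next
      case False
      then have "v = b" using e ab by auto
      then have "e = {v, a}" using ab by auto
      then show ?thesis using e unfolding N_def by auto
    qed
  qed (auto simp: N_def)
  have injN: "inj_on (\<lambda>w. {v, w}) N"
  proof (rule inj_onI)
    fix w1 w2 assume "w1 \<in> N" "w2 \<in> N" "{v, w1} = {v, w2}"
    then show "w1 = w2" using Nv by (metis doubleton_eq_iff)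
  qed
  have deg: "degree E v = card N"
    unfolding degree_def img using card_image[OF injN] .
  obtain d0 where "d0 \<in> D" using assms(8) vS unfolding D_monotone_tree_def by blast
  then have Dne: "D \<noteq> {}" by auto
  define f where "f w = sig D (w - v)" for w
  have fsub: "f ` N \<subseteq> pats D"
  proof
    fix p assume "p \<in> f ` N"
    then obtain w where w: "w \<in> N" "p = f w" by auto
    have "\<forall>d\<in>D. (w - v) \<bullet> d \<noteq> 0"
      using assms(6) Nv[OF w(1)] vS unfolding D_general_position_def d_general_position_def
      by (auto simp: inner_diff_left)
    then show "p \<in> pats D" unfolding pats_def w f_def by blast
  qed
  have finj: "inj_on f N"
  proof (rule inj_onI)
    fix w1 w2 assume w1: "w1 \<in> N" and w2: "w2 \<in> N" and feq: "f w1 = f w2"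
    show "w1 = w2"
    proof (rule ccontr)
      assume ne: "w1 \<noteq> w2"
      define ps where "ps = [w1, v, w2]"
      have e1: "{w1, v} \<in> E" using w1 N_def by (simp add: insert_commute)
      have e2: "{v, w2} \<in> E" using w2 N_def by simp
      have gp: "graph_path S E ps w1 w2"
        unfolding graph_path_def ps_def
      proof (intro conjI allI impI)
        fix i assume "Suc i < length [w1, v, w2]"
        then have "i = 0 \<or> i = 1" by auto
        then show "{[w1, v, w2] ! i, [w1, v, w2] ! Suc i} \<in> E" using e1 e2 by auto
      qed (use Nv w1 w2 ne vS in auto)
      obtain d where d: "d \<in> D" "\<forall>ps. graph_path S E ps w1 w2 \<longrightarrow> d_monotone d ps"
        using assms(8) Nv w1 w2 unfolding D_monotone_tree_def by blast
      then have "d_monotone d ps" using gp by blast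
      then have "(w1 \<bullet> d < v \<bullet> d \<and> v \<bullet> d < w2 \<bullet> d) \<or> (w1 \<bullet> d > v \<bullet> d \<and> v \<bullet> d > w2 \<bullet> d)"
        unfolding d_monotone_def ps_def by auto
      moreover have "f w1 d = f w2 d" using feq by simp
      ultimately show False using d(1) unfolding f_def sig_def by (auto simp: inner_diff_left)
    qed
  qed
  have "card N = card (f ` N)" using card_image[OF finj] by simp
  also have "\<dots> \<le> card (pats D)" by (rule card_mono[OF pats_finite[OF assms(2)] fsub])
  also have "\<dots> \<le> 2 * card D" using pats_card[OF assms(2)] Dne by simp
  finally show "degree E v \<le> 2 * k" using deg assms(3) by simp
qed

end
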